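(* Let $p \geq 1$ and $N\in\mathbb{N}$. Let $\mu_1$ and $\mu_2$ be two permutation invariant Radon probability measures on $\mathbb{R}^N$ whose $p$:th moments are finite. Let $I\subset[N]$. If $f:\mathbb{R}^{|I|}\to\mathbb{R}$ is a bounded $1$-Lipschitz function with respect to the $\|\cdot\|_p$ norm, then \[ \left|\langle f\circ P_I\rangle_{\mu_1}-\langle f\circ P_I\rangle_{\mu_2}\right| \leq \left(\frac{|I|}{1-\frac{|I|}{N}}\right)^{1/p} w_p(\mu_1,\mu_2;N). \]
   Context: $[N]=\{1,\dots,N\}$ and $S_N$ is its permutation group. For $\pi\in S_N$, $Q_\pi:\mathbb{R}^N\to\mathbb{R}^N$ is $(Q_\pi x)_j=x_{\pi^{-1}(j)}$. A probability measure $\mu$ on $\mathbb{R}^N$ is permutation invariant if for every integrable $f$ and $\pi\in S_N$, $f\circ Q_\pi$ is integrable and $\langle f\circ Q_\pi\rangle_\mu=\langle f\rangle_\mu$. For $I\subset[N]$ with $n=|I|$, let $\pi_I:I\to[n]$ be the unique order-preserving bijection; $P_I:\mathbb{R}^N\to\mathbb{R}^n$ is $(P_Ix)_j=x_{\pi_I^{-1}(j)}$. The specific $p$-norm fluctuation distance is $w_p(\mu_1,\mu_2;N)=\left(\inf_\gamma\int\gamma(dx,dy)\frac1N\sum_{i=1}^N|x_i-y_i|^p\right)^{1/p}$, the infimum over all couplings $\gamma$ of $\mu_1,\mu_2$ (probability measures on $\mathbb{R}^N\times\mathbb{R}^N$ with marginals $\mu_1$ and $\mu_2$). A function is $1$-Lipschitz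 w.r.t. $\|\cdot\|_p$ if $|f(\phi)-f(\psi)|\le\|\phi-\psi\|_p$ for all $\phi,\psi$. *)

theory Defs
  imports "HOL-Probability.Probability"
begin

definition RN :: "nat \<Rightarrow> (nat \<Rightarrow> real) measure" where
  "RN N = PiM {1..N} (\<lambda>_. borel)"

definition Qperm :: "nat \<Rightarrow> (nat \<Rightarrow> nat) \<Rightarrow> (nat \<Rightarrow> real) \<Rightarrow> (nat \<Rightarrow> real)" where
  "Qperm N \<pi> x = restrict (\<lambda>j. x (inv_into {1..N} \<pi> j)) {1..N}"

definition perm_invariant :: "nat \<Rightarrow> (nat \<Rightarrow> real) measure \<Rightarrow> bool" where
  "perm_invariant N \<mu> \<longleftrightarrow>
     (\<forall>f :: (nat \<Rightarrow> real) \<Rightarrow> real. \<forall>\<pi>. \<pi> permutes {1..N} \<longrightarrow> integrable \<mu> f \<longrightarrow>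
        integrable \<mu> (f \<circ> Qperm N \<pi>) \<and> integral\<^sup>L \<mu> (f \<circ> Qperm N \<pi>) = integral\<^sup>L \<mu> f)"

definition PI :: "nat set \<Rightarrow> (nat \<Rightarrow> real) \<Rightarrow> (nat \<Rightarrow> real)" where
  "PI I x = restrict (\<lambda>j. x (sorted_list_of_set I ! (j - 1))) {1..card I}"

definition pnorm :: "real \<Rightarrow> nat \<Rightarrow> (nat \<Rightarrow> real) \<Rightarrow> real" where
  "pnorm p n x = (\<Sum>j\<in>{1..n}. \<bar>x j\<bar> powr p) powr (1 / p)"

definition couplings :: "nat \<Rightarrow> (nat \<Rightarrow> real) measure \<Rightarrow> (nat \<Rightarrow> real) measure
    \<Rightarrow> ((nat \<Rightarrow> real) \<times> (nat \<Rightarrow> real)) measure set" where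
  "couplings N \<mu>1 \<mu>2 = {\<gamma>. sets \<gamma> = sets (RN N \<Otimes>\<^sub>M RN N) \<and>
       distr \<gamma> (RN N) fst = \<mu>1 \<and> distr \<gamma> (RN N) snd = \<mu>2}"

definition wp :: "real \<Rightarrow> (nat \<Rightarrow> real) measure \<Rightarrow> (nat \<Rightarrow> real) measure \<Rightarrow> nat \<Rightarrow> real" where
  "wp p \<mu>1 \<mu>2 N = (enn2real (INF \<gamma>\<in>couplings N \<mu>1 \<mu>2.
       \<integral>\<^sup>+ z. ennreal ((1 / real N) * (\<Sum>i\<in>{1..N}. \<bar>fst z i - snd z i\<bar> powr p)) \<partial>\<gamma>)) powr (1 / p)"

end

theory Submission
  imports Defs
begin



lemma modcancel:
  fixes a b t N :: nat
  assumes e: "(a + t) mod N = (b + t) mod N" and "a < N" "b < N"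
  shows "a = b"
proof -
  have *: "x = y" if "(x + t) mod N = (y + t) mod N" "x < N" "y < N" "y \<le> x" for x y
  proof -
    have "N dvd (x + t) - (y + t)" using that mod_eq_dvd_iff_nat[of "y+t" "x+t" N] by simp
    then have "N dvd x - y" by simp
    moreover have "x - y < N" using that by simp
    ultimately have "x - y = 0" using nat_dvd_not_less by blast
    then show ?thesis using that by simp
  qed
  show ?thesis using *[of a b] *[of b a] assms by (cases "b \<le> a") auto
qed

lemma convex_abs_powr:
  assumes p: "p \<ge> (1::real)"
  shows "convex_on UNIV (\<lambda>x::real. \<bar>x\<bar> powr p)"
proof -
  have c0: "convex_on {0<..} (\<lambda>x::real. x powr p)" using powr_convex[OF p] .
  have c1: "(u * a + v * b) powr p \<le> u * a powr p + v * b powr p"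
    if "a \<ge> 0" "b \<ge> 0" "u \<ge> 0" "v \<ge> 0" "u + v = 1" for a b u v :: real
  proof (cases "a = 0 \<or> b = 0")
    case True
    have key: "(w * c) powr p \<le> w * c powr p" if "0 \<le> w" "w \<le> 1" "0 \<le> c" for w c :: real
    proof -
      have "(w * c) powr p = w powr p * c powr p" using that by (simp add: powr_mult)
      also have "w powr p \<le> w" 
      proof (cases "w = 0")
        case False
        then have "w powr p \<le> w powr 1" using that p by (intro powr_mono') auto
        then show ?thesis using that by simp
      qed (use p in simp)
      then have "w powr p * c powr p \<le> w * c powr p" using that by (cases "w=0") (auto intro: mult_right_mono)
      finally show ?thesis .
    qed
    show ?thesis using True
    proof
      assume "a = 0" then show ?thesis using key[of v b] that by auto
    next
      assume "b = 0" then show ?thesis using key[of u a] that by auto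
    qed
  next
    case False
    then have ab: "a \<in> {0<..}" "b \<in> {0<..}" using that by auto
    have "\<forall>x\<in>{0<..}. \<forall>y\<in>{0<..}. \<forall>u\<ge>0. \<forall>v\<ge>0. u + v = 1 \<longrightarrow> (u *\<^sub>R x + v *\<^sub>R y) powr p \<le> u * x powr p + v * (y::real) powr p"
      using c0 unfolding convex_on_def by blast
    then have "(u *\<^sub>R a + v *\<^sub>R b) powr p \<le> u * a powr p + v * b powr p" using ab that by blast
    then show ?thesis by simp
  qed
  show ?thesis unfolding convex_on_def
  proof (intro conjI ballI allI impI)
    fix x y u v :: real assume uv: "0 \<le> u" "0 \<le> v" "u + v = 1"
    have "\<bar>u *\<^sub>R x + v *\<^sub>R y\<bar> \<le> u * \<bar>x\<bar> + v * \<bar>y\<bar>"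
      using uv by (metis abs_mult abs_of_nonneg abs_triangle_ineq real_scaleR_def)
    then have "\<bar>u *\<^sub>R x + v *\<^sub>R y\<bar> powr p \<le> (u * \<bar>x\<bar> + v * \<bar>y\<bar>) powr p"
      using p by (intro powr_mono2) auto
    also have "\<dots> \<le> u * \<bar>x\<bar> powr p + v * \<bar>y\<bar> powr p" using c1[of "\<bar>x\<bar>" "\<bar>y\<bar>" u v] uv by simp
    finally show "\<bar>u *\<^sub>R x + v *\<^sub>R y\<bar> powr p \<le> u * \<bar>x\<bar> powr p + v * \<bar>y\<bar> powr p" .
  qed (rule convex_UNIV)
qed

definition cyc :: "nat \<Rightarrow> nat \<Rightarrow> nat \<Rightarrow> nat" where
  "cyc N t j = (if j \<in> {1..N} then (j + t - 1) mod N + 1 else j)"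

lemma cyc_inj:
  assumes "j \<in> {1..N}" "j' \<in> {1..N}" "cyc N t j = cyc N t j'" shows "j = j'"
proof -
  have "(j - 1 + t) mod N = (j' - 1 + t) mod N" using assms by (auto simp: cyc_def)
  then have "j - 1 = j' - 1" by (rule modcancel) (use assms in auto)
  then show ?thesis using assms by auto
qed

lemma cyc_permutes: "cyc N t permutes {1..N}"
proof (rule bij_imp_permutes)
  have "inj_on (cyc N t) {1..N}" using cyc_inj by (meson inj_onI)
  moreover have "cyc N t ` {1..N} \<subseteq> {1..N}"
    proof
    fix y assume "y \<in> cyc N t ` {1..N}"
    then obtain j where j: "j \<in> {1..N}" "y = cyc N t j" by auto
    then have "N > 0" by auto
    then have "(j + t - 1) mod N < N" by simp
    then show "y \<in> {1..N}" using j by (simp add: cyc_def Suc_le_eq)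
  qed
  ultimately show "bij_betw (cyc N t) {1..N} {1..N}"
    by (simp add: bij_betw_def endo_inj_surj)
qed (auto simp: cyc_def)

lemma cyc_inv_bij:
  assumes i: "i \<in> {1..N}"
  shows "bij_betw (\<lambda>t. inv_into {1..N} (cyc N t) i) {..<N} {1..N}"
proof -
  have bij: "bij_betw (cyc N t) {1..N} {1..N}" for t using cyc_permutes permutes_imp_bij by blast
  have mem: "inv_into {1..N} (cyc N t) i \<in> {1..N}" for t
    using bij i by (metis bij_betw_def inv_into_into)
  have eq: "cyc N t (inv_into {1..N} (cyc N t) i) = i" for t
    using bij i by (metis bij_betw_def f_inv_into_f)
  have inj: "inj_on (\<lambda>t. inv_into {1..N} (cyc N t) i) {..<N}"
  proof (rule inj_onI)
    fix t t' assume tt: "t \<in> {..<N}" "t' \<in> {..<N}"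
      and e: "inv_into {1..N} (cyc N t) i = inv_into {1..N} (cyc N t') i"
    define j where "j = inv_into {1..N} (cyc N t) i"
    have j: "j \<in> {1..N}" using mem j_def by auto
    have "cyc N t j = cyc N t' j" using eq[of t] eq[of t'] e j_def by simp
    then have "(j - 1 + t) mod N = (j - 1 + t') mod N" using j by (auto simp: cyc_def)
    then have "(t + (j - 1)) mod N = (t' + (j - 1)) mod N" by (simp add: add.commute)
    then show "t = t'" by (rule modcancel) (use tt in auto)
  qed
  have "(\<lambda>t. inv_into {1..N} (cyc N t) i) ` {..<N} = {1..N}"
    using inj mem by (intro card_subset_eq) (auto simp: card_image)
  then show ?thesis using inj by (simp add: bij_betw_def)
qed

lemma space_RN: "space (RN n) = PiE {1..n} (\<lambda>_. UNIV)"
  by (simp add: RN_def space_PiM)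

lemma Qperm_meas:
  assumes "\<pi> permutes {1..N}"
  shows "Qperm N \<pi> \<in> measurable (RN N) (RN N)"
proof -
  have *: "inv_into {1..N} \<pi> j \<in> {1..N}" if "j \<in> {1..N}" for j
    using assms that by (metis bij_betw_def inv_into_into permutes_imp_bij)
  show ?thesis unfolding Qperm_def RN_def
    apply (rule measurable_restrict)
    apply (rule measurable_component_singleton)
    using * by blast
qed

lemma sl_mem:
  assumes "I \<subseteq> {1..(N::nat)}" "j \<in> {1..card I}"
  shows "sorted_list_of_set I ! (j - 1) \<in> I"
proof -
  have fin: "finite I" by (rule finite_subset[OF assms(1)]) simp
  have "j - 1 < card I" using assms(2) by auto
  then have "j - 1 < length (sorted_list_of_set I)" by simp
  then have "sorted_list_of_set I ! (j - 1) \<in> set (sorted_list_of_set I)" by (rule nth_mem)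
  then show ?thesis using fin by simp
qed

lemma PI_meas:
  assumes "I \<subseteq> {1..(N::nat)}"
  shows "PI I \<in> measurable (RN N) (RN (card I))"
  unfolding PI_def RN_def
    apply (rule measurable_restrict)
    apply (rule measurable_component_singleton)
  using sl_mem[OF assms] assms by blast

lemma PI_space: "PI I x \<in> space (RN (card I))"
  by (simp add: space_RN PI_def)


lemma distr_pair_snd':
  assumes "prob_space M" "prob_space N"
  shows "distr (M \<Otimes>\<^sub>M N) N snd = N"
proof (intro measure_eqI)
  fix A assume A: "A \<in> sets (distr (M \<Otimes>\<^sub>M N) N snd)"
  from A have "emeasure (distr (M \<Otimes>\<^sub>M N) N snd) A = emeasure (M \<Otimes>\<^sub>M N) (space M \<times> A)"
    by (auto simp add: emeasure_distr space_pair_measure dest: sets.sets_into_space intro!: arg_cong2[where f=emeasure])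
  with A assms show "emeasure (distr (M \<Otimes>\<^sub>M N) N snd) A = emeasure N A"
    by (simp add: prob_space_imp_sigma_finite sigma_finite_measure.emeasure_pair_measure_Times prob_space.emeasure_space_1)
qed simp

lemma pnorm_meas: "(\<lambda>x. pnorm p N x powr p) \<in> borel_measurable (RN N)"
  unfolding pnorm_def RN_def by measurable

lemma pnorm_pow:
  assumes "p > 0"
  shows "pnorm p n x powr p = (\<Sum>j\<in>{1..n}. \<bar>x j\<bar> powr p)"
proof -
  have "(\<Sum>j\<in>{1..n}. \<bar>x j\<bar> powr p) \<ge> 0" by (intro sum_nonneg) auto
  then show ?thesis using assms unfolding pnorm_def by (simp add: powr_powr)
qed




theorem lemma2p3:
  fixes p :: real and N :: nat and \<mu>1 \<mu>2 :: "(nat \<Rightarrow> real) measure"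
    and I :: "nat set" and f :: "(nat \<Rightarrow> real) \<Rightarrow> real"
  assumes p: "p \<ge> 1"
    and prob1: "prob_space \<mu>1" and sets1: "sets \<mu>1 = sets (RN N)"
    and prob2: "prob_space \<mu>2" and sets2: "sets \<mu>2 = sets (RN N)"
    and inv1: "perm_invariant N \<mu>1" and inv2: "perm_invariant N \<mu>2"
    and mom1: "(\<integral>\<^sup>+ x. ennreal (pnorm p N x powr p) \<partial>\<mu>1) < \<infinity>"
    and mom2: "(\<integral>\<^sup>+ x. ennreal (pnorm p N x powr p) \<partial>\<mu>2) < \<infinity>"
    and I: "I \<subseteq> {1..N}" and Iproper: "card I < N"
    and fmeas: "f \<in> borel_measurable (RN (card I))"
    and fbdd: "\<exists>B. \<forall>\<phi>\<in>space (RN (card I)). \<bar>f \<phi>\<bar> \<le> B"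
    and flip: "\<forall>\<phi>\<in>space (RN (card I)). \<forall>\<psi>\<in>space (RN (card I)).
                 \<bar>f \<phi> - f \<psi>\<bar> \<le> pnorm p (card I) (\<lambda>j. \<phi> j - \<psi> j)"
  shows "\<bar>integral\<^sup>L \<mu>1 (f \<circ> PI I) - integral\<^sup>L \<mu>2 (f \<circ> PI I)\<bar>
           \<le> (real (card I) / (1 - real (card I) / real N)) powr (1 / p) * wp p \<mu>1 \<mu>2 N"
proof -
  define k where "k = card I"
  define g where "g = f \<circ> PI I"
  define Q where "Q t = Qperm N (cyc N t)" for t
  define S where "S z = (\<Sum>i\<in>{1..N}. \<bar>fst z i - snd z i\<bar> powr p)" for z :: "(nat \<Rightarrow> real) \<times> (nat \<Rightarrow> real)"
  define E where "E \<gamma> = (\<integral>\<^sup>+ z. ennreal ((1 / real N) * S z) \<partial>\<gamma>)" for \<gamma>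
  define D where "D = integral\<^sup>L \<mu>1 g - integral\<^sup>L \<mu>2 g"
  have p0: "p > 0" using p by simp
  have N0: "N > 0" using Iproper by simp
  obtain B where B: "\<forall>\<phi>\<in>space (RN (card I)). \<bar>f \<phi>\<bar> \<le> B" using fbdd by auto
  have gB: "\<bar>g x\<bar> \<le> B" for x using B PI_space[of I x] by (simp add: g_def)
  have B0: "B \<ge> 0" using gB[of undefined] by simp
  have gmeas: "g \<in> borel_measurable (RN N)"
    unfolding g_def by (rule measurable_comp[OF PI_meas[OF I] fmeas])
  have gQmeas: "g \<circ> Q t \<in> borel_measurable (RN N)" for t
    unfolding Q_def by (rule measurable_comp[OF Qperm_meas[OF cyc_permutes] gmeas])
  have avg: "integral\<^sup>L \<mu> g = (\<Sum>t<N. integral\<^sup>L \<mu> (g \<circ> Q t)) / N"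
    if inv: "perm_invariant N \<mu>" and pr: "prob_space \<mu>" and ss: "sets \<mu> = sets (RN N)" for \<mu>
  proof -
    interpret prob_space \<mu> by (rule pr)
    have "g \<in> borel_measurable \<mu>" by (subst measurable_cong_sets[OF ss refl]) (rule gmeas)
    then have gi: "integrable \<mu> g" using gB by (intro integrable_const_bound[where B=B]) auto
    have "integral\<^sup>L \<mu> (g \<circ> Q t) = integral\<^sup>L \<mu> g" for t
      using inv gi cyc_permutes unfolding perm_invariant_def Q_def by blast
    then show ?thesis using N0 by simp
  qed
  have pw: "\<bar>(\<Sum>t<N. g (Q t x) - g (Q t y)) / N\<bar> powr p \<le> (k / N) * S (x, y)" for x y
  proof -
    define s where "s j = sorted_list_of_set I ! (j - 1)" for j
    define iv where "iv t j = inv_into {1..N} (cyc N t) (s j)" for t j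
    define a where "a t = pnorm p k (\<lambda>j. PI I (Q t x) j - PI I (Q t y) j)" for t
    have sN: "s j \<in> {1..N}" if "j \<in> {1..k}" for j
      using sl_mem[OF I, of j] that I unfolding s_def k_def by auto
    have a0: "a t \<ge> 0" for t unfolding a_def pnorm_def by simp
    have PIQ: "PI I (Q t x) j = x (iv t j)" if "j \<in> {1..k}" for x t j
      using that sN[OF that] unfolding PI_def Q_def Qperm_def iv_def s_def k_def by simp
    have st1: "\<bar>(\<Sum>t<N. g (Q t x) - g (Q t y)) / N\<bar> \<le> (\<Sum>t<N. a t) / N"
    proof -
      have "\<bar>\<Sum>t<N. g (Q t x) - g (Q t y)\<bar> \<le> (\<Sum>t<N. \<bar>g (Q t x) - g (Q t y)\<bar>)" by (rule sum_abs)
      also have "\<dots> \<le> (\<Sum>t<N. a t)"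
      proof (rule sum_mono)
        fix t
        show "\<bar>g (Q t x) - g (Q t y)\<bar> \<le> a t"
          using flip PI_space[of I "Q t x"] PI_space[of I "Q t y"] unfolding a_def g_def k_def by simp
      qed
      finally show ?thesis using N0 by (simp add: divide_right_mono)
    qed
    have st2: "((\<Sum>t<N. a t) / N) powr p \<le> (\<Sum>t<N. (1 / N) * \<bar>a t\<bar> powr p)"
    proof -
      have "\<bar>\<Sum>t<N. (1 / real N) *\<^sub>R a t\<bar> powr p \<le> (\<Sum>t<N. (1 / N) * \<bar>a t\<bar> powr p)"
        by (rule convex_on_sum[OF _ _ convex_abs_powr[OF p]]) (use N0 in auto)
      moreover have "(\<Sum>t<N. (1 / real N) *\<^sub>R a t) = (\<Sum>t<N. a t) / N"
        by (simp add: sum_divide_distrib)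
      moreover have "(\<Sum>t<N. a t) \<ge> 0" using a0 by (simp add: sum_nonneg)
      ultimately show ?thesis by simp
    qed
    have st3: "\<bar>a t\<bar> powr p = (\<Sum>j\<in>{1..k}. \<bar>x (iv t j) - y (iv t j)\<bar> powr p)" for t
    proof -
      have "\<bar>a t\<bar> powr p = (\<Sum>j\<in>{1..k}. \<bar>PI I (Q t x) j - PI I (Q t y) j\<bar> powr p)"
        using a0[of t] pnorm_pow[OF p0] unfolding a_def by simp
      also have "\<dots> = (\<Sum>j\<in>{1..k}. \<bar>x (iv t j) - y (iv t j)\<bar> powr p)"
        by (intro sum.cong refl) (simp add: PIQ)
      finally show ?thesis .
    qed
    have st4: "(\<Sum>t<N. \<bar>x (iv t j) - y (iv t j)\<bar> powr p) = S (x, y)" if "j \<in> {1..k}" for j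
    proof -
      have "bij_betw (\<lambda>t. iv t j) {..<N} {1..N}"
        unfolding iv_def by (rule cyc_inv_bij[OF sN[OF that]])
      then show ?thesis unfolding S_def
        by (simp add: sum.reindex_bij_betw[where h="\<lambda>t. iv t j" and g="\<lambda>i. \<bar>x i - y i\<bar> powr p", symmetric])
    qed
    have "(\<Sum>t<N. (1 / N) * \<bar>a t\<bar> powr p) = (1 / N) * (\<Sum>j\<in>{1..k}. \<Sum>t<N. \<bar>x (iv t j) - y (iv t j)\<bar> powr p)"
      by (simp add: st3 sum_divide_distrib[symmetric] sum.swap[of _ "{..<N}"])
    also have "\<dots> = (k / N) * S (x, y)" using st4 by simp
    finally have st5: "(\<Sum>t<N. (1 / N) * \<bar>a t\<bar> powr p) = (k / N) * S (x, y)" .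
    have "\<bar>(\<Sum>t<N. g (Q t x) - g (Q t y)) / N\<bar> powr p \<le> ((\<Sum>t<N. a t) / N) powr p"
      using st1 p0 by (intro powr_mono2) auto
    then show ?thesis using st2 st5 by simp
  qed
  have Dbound: "\<bar>D\<bar> powr p \<le> k * enn2real (E \<gamma>)" if gam: "\<gamma> \<in> couplings N \<mu>1 \<mu>2" and Efin: "E \<gamma> < \<infinity>" for \<gamma>
  proof -
    have sg: "sets \<gamma> = sets (RN N \<Otimes>\<^sub>M RN N)" and m1: "distr \<gamma> (RN N) fst = \<mu>1"
      and m2: "distr \<gamma> (RN N) snd = \<mu>2"
      using gam unfolding couplings_def by auto
    have fstm: "fst \<in> measurable \<gamma> (RN N)" by (subst measurable_cong_sets[OF sg refl]) (rule measurable_fst)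
    have sndm: "snd \<in> measurable \<gamma> (RN N)" by (subst measurable_cong_sets[OF sg refl]) (rule measurable_snd)
    have "prob_space \<gamma>" using prob_space_distrD[OF fstm] prob1 m1 by simp
    then interpret G: prob_space \<gamma> .
    define G where "G z = (\<Sum>t<N. g (Q t (fst z)) - g (Q t (snd z))) / N" for z
    have ma[measurable]: "(\<lambda>z. g (Q t (fst z))) \<in> borel_measurable \<gamma>" for t
      using measurable_comp[OF fstm gQmeas[of t]] by (simp add: comp_def)
    have mb[measurable]: "(\<lambda>z. g (Q t (snd z))) \<in> borel_measurable \<gamma>" for t
      using measurable_comp[OF sndm gQmeas[of t]] by (simp add: comp_def)
    have i1: "integrable \<gamma> (\<lambda>z. g (Q t (fst z)))" for t
      using gB by (intro G.integrable_const_bound[where B=B]) auto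
    have i2: "integrable \<gamma> (\<lambda>z. g (Q t (snd z)))" for t
      using gB by (intro G.integrable_const_bound[where B=B]) auto
    have e1: "integral\<^sup>L \<mu>1 (g \<circ> Q t) = integral\<^sup>L \<gamma> (\<lambda>z. g (Q t (fst z)))" for t
      using integral_distr[OF fstm gQmeas[of t]] m1 by (simp add: comp_def)
    have e2: "integral\<^sup>L \<mu>2 (g \<circ> Q t) = integral\<^sup>L \<gamma> (\<lambda>z. g (Q t (snd z)))" for t
      using integral_distr[OF sndm gQmeas[of t]] m2 by (simp add: comp_def)
    have "integral\<^sup>L \<gamma> G = (\<Sum>t<N. integral\<^sup>L \<gamma> (\<lambda>z. g (Q t (fst z)) - g (Q t (snd z)))) / N"
      unfolding G_def
      by (simp add: Bochner_Integration.integral_sum Bochner_Integration.integrable_diff i1 i2)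
    also have "\<dots> = (\<Sum>t<N. integral\<^sup>L \<gamma> (\<lambda>z. g (Q t (fst z))) - integral\<^sup>L \<gamma> (\<lambda>z. g (Q t (snd z)))) / N"
      by (simp add: Bochner_Integration.integral_diff i1 i2)
    also have "\<dots> = D"
      unfolding D_def avg[OF inv1 prob1 sets1] avg[OF inv2 prob2 sets2] e1 e2
      by (simp add: sum_subtractf diff_divide_distrib)
    finally have DG: "D = integral\<^sup>L \<gamma> G" by simp
    have Gm[measurable]: "G \<in> borel_measurable \<gamma>" unfolding G_def by measurable
    have GB: "\<bar>G z\<bar> \<le> 2 * B" for z
    proof -
      have "\<bar>\<Sum>t<N. g (Q t (fst z)) - g (Q t (snd z))\<bar> \<le> (\<Sum>t<N. \<bar>g (Q t (fst z)) - g (Q t (snd z))\<bar>)"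
        by (rule sum_abs)
      also have "\<dots> \<le> (\<Sum>t<N. 2 * B)"
      proof (rule sum_mono)
        fix t
        show "\<bar>g (Q t (fst z)) - g (Q t (snd z))\<bar> \<le> 2 * B"
          using gB[of "Q t (fst z)"] gB[of "Q t (snd z)"] by linarith
      qed
      finally show ?thesis using N0 unfolding G_def by (simp add: divide_le_eq mult.commute)
    qed
    have iG: "integrable \<gamma> G" using GB by (intro G.integrable_const_bound[where B="2*B"]) auto
    have iaG: "integrable \<gamma> (\<lambda>z. \<bar>G z\<bar>)" using GB by (intro G.integrable_const_bound[where B="2*B"]) auto
    have iGp: "integrable \<gamma> (\<lambda>z. \<bar>\<bar>G z\<bar>\<bar> powr p)"
    proof (rule G.integrable_const_bound[where B="(2*B) powr p"])
      show "AE x in \<gamma>. norm (\<bar>\<bar>G x\<bar>\<bar> powr p) \<le> (2 * B) powr p"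
        using GB p0 by (intro AE_I2) (simp add: powr_mono2)
    qed measurable
    have J: "\<bar>integral\<^sup>L \<gamma> (\<lambda>z. \<bar>G z\<bar>)\<bar> powr p \<le> integral\<^sup>L \<gamma> (\<lambda>z. \<bar>\<bar>G z\<bar>\<bar> powr p)"
      by (rule G.jensens_inequality[where I=UNIV and q="\<lambda>x. \<bar>x\<bar> powr p", OF iaG _ _ iGp convex_abs_powr[OF p]]) auto
    have "\<bar>D\<bar> \<le> integral\<^sup>L \<gamma> (\<lambda>z. \<bar>G z\<bar>)"
      unfolding DG by (rule integral_abs_bound)
    then have "\<bar>D\<bar> powr p \<le> \<bar>integral\<^sup>L \<gamma> (\<lambda>z. \<bar>G z\<bar>)\<bar> powr p"
      using p0 by (intro powr_mono2) auto
    also have "\<dots> \<le> integral\<^sup>L \<gamma> (\<lambda>z. \<bar>G z\<bar> powr p)" using J by simp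
    finally have DJ: "\<bar>D\<bar> powr p \<le> integral\<^sup>L \<gamma> (\<lambda>z. \<bar>G z\<bar> powr p)" .
    have pwG: "\<bar>G z\<bar> powr p \<le> (k / N) * S z" for z
      using pw[of "fst z" "snd z"] unfolding G_def by simp
    show ?thesis
    proof (cases "k = 0")
      case True
      have "integral\<^sup>L \<gamma> (\<lambda>z. \<bar>G z\<bar> powr p) \<le> integral\<^sup>L \<gamma> (\<lambda>z. 0)"
        using pwG True iGp by (intro integral_mono) auto
      moreover have "integral\<^sup>L \<gamma> (\<lambda>z. 0::real) = 0" by simp
      ultimately have "\<bar>D\<bar> powr p \<le> 0" using DJ by linarith
      then have "\<bar>D\<bar> powr p = 0" using powr_ge_zero[of "\<bar>D\<bar>" p] by linarith
      then show ?thesis using True by simp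
    next
      case False
      have kpos: "real k > 0" using False by simp
      have iGp': "integrable \<gamma> (\<lambda>z. \<bar>G z\<bar> powr p / k)" using iGp by simp
      have nnz: "integral\<^sup>L \<gamma> (\<lambda>z. \<bar>G z\<bar> powr p / k) \<ge> 0" by (intro integral_nonneg_AE AE_I2) simp
      have "ennreal (integral\<^sup>L \<gamma> (\<lambda>z. \<bar>G z\<bar> powr p / k)) = (\<integral>\<^sup>+ z. ennreal (\<bar>G z\<bar> powr p / k) \<partial>\<gamma>)"
        by (rule nn_integral_eq_integral[symmetric]) (use iGp' in auto)
      also have "\<dots> \<le> E \<gamma>"
        unfolding E_def
      proof (rule nn_integral_mono)
        fix z
        have "\<bar>G z\<bar> powr p / k \<le> ((k / N) * S z) / k"
          using pwG[of z] kpos by (intro divide_right_mono) auto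
        also have "\<dots> = (1 / real N) * S z" using kpos by simp
        finally show "ennreal (\<bar>G z\<bar> powr p / k) \<le> ennreal (1 / real N * S z)"
          by (rule ennreal_leI)
      qed
      finally have "enn2real (ennreal (integral\<^sup>L \<gamma> (\<lambda>z. \<bar>G z\<bar> powr p / k))) \<le> enn2real (E \<gamma>)"
        using Efin by (intro enn2real_mono) auto
      then have "integral\<^sup>L \<gamma> (\<lambda>z. \<bar>G z\<bar> powr p / k) \<le> enn2real (E \<gamma>)"
        using nnz by simp
      then have "integral\<^sup>L \<gamma> (\<lambda>z. \<bar>G z\<bar> powr p) / k \<le> enn2real (E \<gamma>)"
        by simp
      then have "integral\<^sup>L \<gamma> (\<lambda>z. \<bar>G z\<bar> powr p) \<le> k * enn2real (E \<gamma>)"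
        using kpos by (simp add: divide_le_eq mult.commute)
      then show ?thesis using DJ by simp
    qed
  qed
  have cpl0: "\<mu>1 \<Otimes>\<^sub>M \<mu>2 \<in> couplings N \<mu>1 \<mu>2"
  proof -
    have s: "sets (\<mu>1 \<Otimes>\<^sub>M \<mu>2) = sets (RN N \<Otimes>\<^sub>M RN N)" using sets1 sets2 by (rule sets_pair_measure_cong)
    have "distr (\<mu>1 \<Otimes>\<^sub>M \<mu>2) (RN N) fst = distr (\<mu>1 \<Otimes>\<^sub>M \<mu>2) \<mu>1 fst"
      by (rule distr_cong) (use sets1 in auto)
    also have "\<dots> = \<mu>1" by (rule prob_space.distr_pair_fst[OF prob2])
    finally have d1: "distr (\<mu>1 \<Otimes>\<^sub>M \<mu>2) (RN N) fst = \<mu>1" .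
    have "distr (\<mu>1 \<Otimes>\<^sub>M \<mu>2) (RN N) snd = distr (\<mu>1 \<Otimes>\<^sub>M \<mu>2) \<mu>2 snd"
      by (rule distr_cong) (use sets2 in auto)
    also have "\<dots> = \<mu>2" by (rule distr_pair_snd'[OF prob1 prob2])
    finally have d2: "distr (\<mu>1 \<Otimes>\<^sub>M \<mu>2) (RN N) snd = \<mu>2" .
    show ?thesis unfolding couplings_def using s d1 d2 by simp
  qed
  have Efin0: "E (\<mu>1 \<Otimes>\<^sub>M \<mu>2) < \<infinity>"
  proof -
    define P where "P x = pnorm p N x powr p" for x
    define c where "c = 2 powr p / real N"
    have c0: "c \<ge> 0" unfolding c_def by simp
    have P0: "P x \<ge> 0" for x unfolding P_def by simp
    have Pm: "P \<in> borel_measurable (RN N)" using pnorm_meas unfolding P_def .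
    have Pm1[measurable]: "P \<in> borel_measurable \<mu>1" by (subst measurable_cong_sets[OF sets1 refl]) (rule Pm)
    have Pm2[measurable]: "P \<in> borel_measurable \<mu>2" by (subst measurable_cong_sets[OF sets2 refl]) (rule Pm)
    have elem: "\<bar>a - b\<bar> powr p \<le> 2 powr p * (\<bar>a\<bar> powr p + \<bar>b\<bar> powr p)" for a b :: real
    proof -
      have "\<bar>a - b\<bar> \<le> \<bar>a\<bar> + \<bar>b\<bar>" by (rule abs_triangle_ineq4)
      also have "\<dots> \<le> 2 * max \<bar>a\<bar> \<bar>b\<bar>" by linarith
      finally have "\<bar>a - b\<bar> powr p \<le> (2 * max \<bar>a\<bar> \<bar>b\<bar>) powr p" using p0 by (intro powr_mono2) auto
      also have "\<dots> = 2 powr p * max \<bar>a\<bar> \<bar>b\<bar> powr p" by (simp add: powr_mult)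
      also have "max \<bar>a\<bar> \<bar>b\<bar> powr p \<le> \<bar>a\<bar> powr p + \<bar>b\<bar> powr p"
        by (cases "\<bar>a\<bar> \<le> \<bar>b\<bar>") (simp_all add: max_def)
      then have "2 powr p * max \<bar>a\<bar> \<bar>b\<bar> powr p \<le> 2 powr p * (\<bar>a\<bar> powr p + \<bar>b\<bar> powr p)"
        by (intro mult_left_mono) auto
      finally show ?thesis .
    qed
    have ptw: "1 / real N * S z \<le> c * P (fst z) + c * P (snd z)" for z
    proof -
      have "S z \<le> (\<Sum>i\<in>{1..N}. 2 powr p * (\<bar>fst z i\<bar> powr p + \<bar>snd z i\<bar> powr p))"
        unfolding S_def by (intro sum_mono elem)
      also have "\<dots> = 2 powr p * (P (fst z) + P (snd z))"
        unfolding P_def pnorm_pow[OF p0] by (simp add: sum.distrib sum_distrib_left[symmetric])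
      finally show ?thesis unfolding c_def using N0 by (simp add: divide_right_mono field_simps)
    qed
    have "E (\<mu>1 \<Otimes>\<^sub>M \<mu>2) \<le> (\<integral>\<^sup>+ z. ennreal c * ennreal (P (fst z)) + ennreal c * ennreal (P (snd z)) \<partial>(\<mu>1 \<Otimes>\<^sub>M \<mu>2))"
      unfolding E_def
    proof (rule nn_integral_mono)
      fix z
      have "ennreal (1 / real N * S z) \<le> ennreal (c * P (fst z) + c * P (snd z))"
        by (rule ennreal_leI[OF ptw])
      also have "\<dots> = ennreal c * ennreal (P (fst z)) + ennreal c * ennreal (P (snd z))"
        using c0 P0 by (simp add: ennreal_plus ennreal_mult)
      finally show "ennreal (1 / real N * S z) \<le> ennreal c * ennreal (P (fst z)) + ennreal c * ennreal (P (snd z))" .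
    qed
    also have "\<dots> = ennreal c * (\<integral>\<^sup>+ z. ennreal (P (fst z)) \<partial>(\<mu>1 \<Otimes>\<^sub>M \<mu>2)) + ennreal c * (\<integral>\<^sup>+ z. ennreal (P (snd z)) \<partial>(\<mu>1 \<Otimes>\<^sub>M \<mu>2))"
      by (simp add: nn_integral_add nn_integral_cmult)
    also have "(\<integral>\<^sup>+ z. ennreal (P (fst z)) \<partial>(\<mu>1 \<Otimes>\<^sub>M \<mu>2)) = (\<integral>\<^sup>+ x. ennreal (P x) \<partial>\<mu>1)"
    proof -
      have "(\<integral>\<^sup>+ x. ennreal (P x) \<partial>distr (\<mu>1 \<Otimes>\<^sub>M \<mu>2) \<mu>1 fst) = (\<integral>\<^sup>+ z. ennreal (P (fst z)) \<partial>(\<mu>1 \<Otimes>\<^sub>M \<mu>2))"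
        by (rule nn_integral_distr) (auto simp: prob_space.distr_pair_fst[OF prob2])
      then show ?thesis by (simp add: prob_space.distr_pair_fst[OF prob2])
    qed
    also have "(\<integral>\<^sup>+ z. ennreal (P (snd z)) \<partial>(\<mu>1 \<Otimes>\<^sub>M \<mu>2)) = (\<integral>\<^sup>+ x. ennreal (P x) \<partial>\<mu>2)"
    proof -
      have "(\<integral>\<^sup>+ x. ennreal (P x) \<partial>distr (\<mu>1 \<Otimes>\<^sub>M \<mu>2) \<mu>2 snd) = (\<integral>\<^sup>+ z. ennreal (P (snd z)) \<partial>(\<mu>1 \<Otimes>\<^sub>M \<mu>2))"
        by (rule nn_integral_distr) (auto simp: distr_pair_snd'[OF prob1 prob2])
      then show ?thesis by (simp add: distr_pair_snd'[OF prob1 prob2])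
    qed
    also have "ennreal c * (\<integral>\<^sup>+ x. ennreal (P x) \<partial>\<mu>1) + ennreal c * (\<integral>\<^sup>+ x. ennreal (P x) \<partial>\<mu>2) < \<infinity>"
      using mom1 mom2 unfolding P_def by (simp add: ennreal_mult_less_top)
    finally show ?thesis .
  qed
  define m where "m = (INF \<gamma>\<in>couplings N \<mu>1 \<mu>2. E \<gamma>)"
  have mfin: "m < \<infinity>" using INF_lower[OF cpl0, of E] Efin0 unfolding m_def by simp
  have wpm: "wp p \<mu>1 \<mu>2 N = enn2real m powr (1/p)" unfolding wp_def m_def E_def S_def by simp
  have key: "\<bar>D\<bar> powr p \<le> k * enn2real m"
  proof (cases "k = 0")
    case True then show ?thesis using Dbound[OF cpl0 Efin0] by simp
  next
    case False
    then have kpos: "real k > 0" by simp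
    have "ennreal (\<bar>D\<bar> powr p / k) \<le> m" unfolding m_def
    proof (rule INF_greatest)
      fix \<gamma> assume \<gamma>: "\<gamma> \<in> couplings N \<mu>1 \<mu>2"
      show "ennreal (\<bar>D\<bar> powr p / k) \<le> E \<gamma>"
      proof (cases "E \<gamma> < \<infinity>")
        case True
        then have "\<bar>D\<bar> powr p / k \<le> enn2real (E \<gamma>)" using Dbound[OF \<gamma> True] kpos
          by (simp add: divide_le_eq mult.commute)
        then have "ennreal (\<bar>D\<bar> powr p / k) \<le> ennreal (enn2real (E \<gamma>))" by (rule ennreal_leI)
        also have "\<dots> = E \<gamma>" using True by (simp add: ennreal_enn2real)
        finally show ?thesis .
      next
        case False then have "E \<gamma> = \<infinity>" by (simp add: less_top[symmetric])
        then show ?thesis by simp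
      qed
    qed
    then have "enn2real (ennreal (\<bar>D\<bar> powr p / k)) \<le> enn2real m" using mfin by (intro enn2real_mono) auto
    then have "\<bar>D\<bar> powr p / k \<le> enn2real m" by simp
    then show ?thesis using kpos by (simp add: divide_le_eq mult.commute)
  qed
  have d: "0 < 1 - real k / N" "1 - real k / N \<le> 1" using Iproper N0 by (auto simp: field_simps k_def)
  have "\<bar>D\<bar> = (\<bar>D\<bar> powr p) powr (1/p)" using p0 by (simp add: powr_powr)
  also have "\<dots> \<le> (k * enn2real m) powr (1/p)" using key p0 by (intro powr_mono2) auto
  also have "\<dots> = k powr (1/p) * enn2real m powr (1/p)" by (simp add: powr_mult)
  also have "\<dots> \<le> (k / (1 - k/N)) powr (1/p) * enn2real m powr (1/p)"
  proof (intro mult_right_mono powr_mono2)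
    have "k * (1 - k / N) \<le> k" using d by (simp add: mult_left_le)
    then show "real k \<le> k / (1 - k/N)" using d by (simp add: le_divide_eq)
  qed (use p0 in auto)
  finally show ?thesis unfolding wpm D_def g_def k_def .
qed

end
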